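(* There exist polynomials $u,\alpha\in k[T]$ such that $$P_2(T)^p-P_2^\sigma(T^p)=m_p\bigl(\bar P'(T)^p\,u(T)-2\alpha(T)\,\bar P(T)^p\bigr)\quad\text{in } W_2(k)[T],$$ and for such $u,\alpha$ a lift of the Frobenius of $U_0$ to $U_1$ is determined by $$F_2(x)=x^p+m_p(u(x)),\qquad F_2(y)=y^p+y^p\,m_p(\alpha(x)).$$
   Context: $k$ is a finite field of characteristic $p\neq 2$, $W_2(k)=W(k)/p^2$, and $\sigma$ is the Frobenius of $W_2(k)$ lifting $a\mapsto a^p$; for $Q=\sum b_jT^j$ set $Q^\sigma=\sum\sigma(b_j)T^j$. Let $P\in W(k)[X]$ be monic of odd degree $d=2g+1$, separable over $\operatorname{Frac}W(k)$, with separable reduction $\bar P\in k[X]$; $P_2$ is its reduction mod $p^2$. $U_0=\operatorname{Spec}k[x,y]/(y^2-\bar P(x))$ and $U_1=\operatorname{Spec}W_2(k)[x,y]/(y^2-P_2(x))$. $m_p$ denotes the map from $k$-objects to $W_2(k)$-objects induced by multiplication by $p$ (coming from the exact sequence $0\to k\xrightarrow{m_p}W_2(k)\to k\to0$), e.g. $m_p:k[T]\to W_2(k)[T]$ and $m_p:\mathcal{O}(U_0)\to\mathcal{O}(U_1)$. A lift of Frobenius on $U_1$ means a $\sigma$-semilinear ring endomorphism $F_2$ of $\mathcal{O}(U_1)$ reducing mod $p$ to $f\mapsto f^p$. *)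

theory Defs
  imports "HOL-Computational_Algebra.Polynomial" "HOL-Computational_Algebra.Polynomial_Factorial"
begin

definition separable_poly :: "'a::field poly \<Rightarrow> bool" where
  "separable_poly f \<longleftrightarrow> coprime f (pderiv f)"

text \<open>Axiomatic description of (W_2(k), reduction, m_p, sigma).  For k perfect these conditions
  characterise W_2(k) (and sigma) up to unique isomorphism.\<close>
definition is_ring_hom :: "('a::comm_ring_1 \<Rightarrow> 'b::comm_ring_1) \<Rightarrow> bool" where
  "is_ring_hom f \<longleftrightarrow> f 1 = 1 \<and> (\<forall>a b. f (a + b) = f a + f b) \<and> (\<forall>a b. f (a * b) = f a * f b)"

definition W2_data :: "nat \<Rightarrow> ('r::comm_ring_1 \<Rightarrow> 'k::field) \<Rightarrow> ('k \<Rightarrow> 'r) \<Rightarrow> ('r \<Rightarrow> 'r) \<Rightarrow> bool" where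
  "W2_data p red mp sigma \<longleftrightarrow>
     is_ring_hom red \<and> surj red \<and>
     (\<forall>r. red r = 0 \<longleftrightarrow> (\<exists>s. r = of_nat p * s)) \<and>
     (\<forall>a b. mp (a + b) = mp a + mp b) \<and> inj mp \<and>
     (\<forall>r. mp (red r) = of_nat p * r) \<and>
     is_ring_hom sigma \<and> (\<forall>r. red (sigma r) = red r ^ p)"

text \<open>Coordinate ring O(U) of the affine curve y^2 = P(x) over a ring A,
  represented by its normal form A[x] \<oplus> A[x] y: the pair (a, b) stands for
  a(x) + b(x) y.\<close>
type_synonym 'a coord = "'a poly \<times> 'a poly"

definition cadd :: "'a::comm_ring_1 coord \<Rightarrow> 'a coord \<Rightarrow> 'a coord" where
  "cadd z w = (fst z + fst w, snd z + snd w)"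

definition cmul :: "'a::comm_ring_1 poly \<Rightarrow> 'a coord \<Rightarrow> 'a coord \<Rightarrow> 'a coord" where
  "cmul P z w = (fst z * fst w + snd z * snd w * P, fst z * snd w + snd z * fst w)"

definition cone :: "'a::comm_ring_1 coord" where "cone = (1, 0)"

definition cconst :: "'a::comm_ring_1 \<Rightarrow> 'a coord" where "cconst c = ([:c:], 0)"

definition cpolyx :: "'a::comm_ring_1 poly \<Rightarrow> 'a coord" where "cpolyx f = (f, 0)"

definition cx :: "'a::comm_ring_1 coord" where "cx = ([:0, 1:], 0)"
definition cy :: "'a::comm_ring_1 coord" where "cy = (0, 1)"

fun cpow :: "'a::comm_ring_1 poly \<Rightarrow> 'a coord \<Rightarrow> nat \<Rightarrow> 'a coord" where
  "cpow P z 0 = cone"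
| "cpow P z (Suc n) = cmul P z (cpow P z n)"

definition cred :: "('r::comm_ring_1 \<Rightarrow> 'k::comm_ring_1) \<Rightarrow> 'r coord \<Rightarrow> 'k coord" where
  "cred red z = (map_poly red (fst z), map_poly red (snd z))"

definition semilinear_endo :: "('r::comm_ring_1 \<Rightarrow> 'r) \<Rightarrow> 'r poly \<Rightarrow> ('r coord \<Rightarrow> 'r coord) \<Rightarrow> bool" where
  "semilinear_endo sigma P F \<longleftrightarrow>
     F cone = cone \<and>
     (\<forall>z w. F (cadd z w) = cadd (F z) (F w)) \<and>
     (\<forall>z w. F (cmul P z w) = cmul P (F z) (F w)) \<and>
     (\<forall>c. F (cconst c) = cconst (sigma c))"

definition frobenius_lift :: "nat \<Rightarrow> ('r::comm_ring_1 \<Rightarrow> 'k::comm_ring_1) \<Rightarrow> ('r \<Rightarrow> 'r) \<Rightarrow> 'r poly \<Rightarrow> ('r coord \<Rightarrow> 'r coord) \<Rightarrow> bool" where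
  "frobenius_lift p red sigma P F \<longleftrightarrow>
     semilinear_endo sigma P F \<and>
     (\<forall>z. cred red (F z) = cpow (map_poly red P) (cred red z) p)"

end

theory Submission
  imports Defs "HOL-Computational_Algebra.Computational_Algebra"
begin

lemma rh_0: assumes "is_ring_hom h" shows "h 0 = 0"
proof -
  have "h (0 + 0) = h 0 + h 0" using assms unfolding is_ring_hom_def by blast
  then show ?thesis by simp
qed
lemma rh_add: "is_ring_hom h \<Longrightarrow> h (a + b) = h a + h b"
  unfolding is_ring_hom_def by blast
lemma rh_mult: "is_ring_hom h \<Longrightarrow> h (a * b) = h a * h b"
  unfolding is_ring_hom_def by blast
lemma rh_1: "is_ring_hom h \<Longrightarrow> h 1 = 1"
  unfolding is_ring_hom_def by blast
lemma rh_neg: assumes "is_ring_hom h" shows "h (- a) = - h a"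
proof -
  have "h (- a) + h a = 0" using rh_add[OF assms, of "- a" a] rh_0[OF assms] by simp
  then show ?thesis by (simp add: eq_neg_iff_add_eq_0)
qed
lemma rh_diff: assumes "is_ring_hom h" shows "h (a - b) = h a - h b"
  using rh_add[OF assms, of a "- b"] rh_neg[OF assms, of b] by simp
lemma rh_of_nat: "is_ring_hom h \<Longrightarrow> h (of_nat n) = of_nat n"
  by (induction n) (simp_all add: rh_0 rh_1 rh_add)
lemma rh_power: "is_ring_hom h \<Longrightarrow> h (a ^ n) = h a ^ n"
  by (induction n) (simp_all add: rh_1 rh_mult)

lemma mp_add: "is_ring_hom h \<Longrightarrow> map_poly h (f + g) = map_poly h f + map_poly h g"
  by (intro poly_eqI) (simp add: coeff_map_poly rh_0 rh_add)
lemma mp_neg: "is_ring_hom h \<Longrightarrow> map_poly h (- f) = - map_poly h f"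
  by (intro poly_eqI) (simp add: coeff_map_poly rh_0 rh_neg)
lemma mp_diff: "is_ring_hom h \<Longrightarrow> map_poly h (f - g) = map_poly h f - map_poly h g"
  by (intro poly_eqI) (simp add: coeff_map_poly rh_0 rh_diff)
lemma mp_smult: "is_ring_hom h \<Longrightarrow> map_poly h (smult c f) = smult (h c) (map_poly h f)"
  by (rule map_poly_smult) (simp_all add: rh_0 rh_mult)
lemma mp_pCons: "is_ring_hom h \<Longrightarrow> map_poly h (pCons c f) = pCons (h c) (map_poly h f)"
  by (rule map_poly_pCons) (simp add: rh_0)
lemma mp_const: "is_ring_hom h \<Longrightarrow> map_poly h [:c:] = [:h c:]"
  by (simp add: mp_pCons)
lemma mp_1: "is_ring_hom h \<Longrightarrow> map_poly h 1 = 1"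
  by (simp add: rh_1)
lemma mp_mult: "is_ring_hom h \<Longrightarrow> map_poly h (f * g) = map_poly h f * map_poly h g"
  by (induction f) (simp_all add: mp_add mp_smult mp_pCons rh_0)
lemma mp_power: "is_ring_hom h \<Longrightarrow> map_poly h (f ^ n) = map_poly h f ^ n"
  by (induction n) (simp_all add: mp_1 mp_mult)
lemma mp_of_nat: "is_ring_hom h \<Longrightarrow> map_poly h (of_nat n) = of_nat n"
  by (simp add: of_nat_poly mp_const rh_of_nat)
lemma mp_pcompose: "is_ring_hom h \<Longrightarrow> map_poly h (pcompose f g) = pcompose (map_poly h f) (map_poly h g)"
  by (induction f) (simp_all add: pcompose_pCons mp_add mp_mult mp_const mp_pCons rh_0)
function pd :: "'a::comm_ring_1 poly \<Rightarrow> 'a poly"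
  where "pd (pCons a p) = (if p = 0 then 0 else p + pCons 0 (pd p))"
  by (auto intro: pCons_cases)
termination pd by (relation "measure degree") simp_all
declare pd.simps[simp del]
lemma pd_0 [simp]: "pd 0 = 0"
  using pd.simps [of 0 0] by simp
lemma pd_pCons: "pd (pCons a p) = p + pCons 0 (pd p)"
  by (simp add: pd.simps)
lemma pd_pderiv: "pd f = pderiv (f :: 'a::idom poly)"
  by (induction f) (simp_all add: pd_pCons pderiv_pCons)
lemma mp_pd: "is_ring_hom h \<Longrightarrow> map_poly h (pd f) = pd (map_poly h f)"
  by (induction f) (simp_all add: pd_pCons mp_add mp_pCons rh_0)
lemma taylor1:
  fixes f g e :: "'a::comm_ring_1 poly"
  assumes "e * e = 0"
  shows "pcompose f (g + e) = pcompose f g + e * pcompose (pd f) g"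
proof (induction f)
  case 0 then show ?case by simp
next
  case (pCons c f)
  have "pcompose (pCons c f) (g + e) = [:c:] + (g + e) * (pcompose f g + e * pcompose (pd f) g)"
    by (simp add: pcompose_pCons pCons)
  also have "\<dots> = [:c:] + g * pcompose f g + e * (pcompose f g + g * pcompose (pd f) g) + (e * e) * pcompose (pd f) g"
    by (simp add: algebra_simps)
  also have "\<dots> = pcompose (pCons c f) g + e * pcompose (pd (pCons c f)) g"
    using assms by (simp add: pcompose_pCons pd_pCons pcompose_add)
  finally show ?case .
qed
lemma mp_monom: "is_ring_hom h \<Longrightarrow> map_poly h (monom c n) = monom (h c) n"
  by (simp add: map_poly_monom rh_0)
lemma mp_comp: "is_ring_hom h \<Longrightarrow> is_ring_hom g \<Longrightarrow> map_poly g (map_poly h f) = map_poly (g \<circ> h) f"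
  by (simp add: map_poly_map_poly rh_0)


section \<open>char p field facts\<close>

lemma frob_add:
  fixes a b :: "'a::comm_semiring_1"
  assumes "prime CHAR('a)"
  shows "(a + b) ^ CHAR('a) = a ^ CHAR('a) + b ^ CHAR('a)"
  using freshmans_dream[OF assms refl] .

lemma frob_of_nat:
  fixes p :: nat
  assumes "prime p" "CHAR('a::comm_semiring_1) = p"
  shows "(of_nat n :: 'a) ^ p = of_nat n"
proof (induction n)
  case 0
  have "p > 0" using assms(1) prime_gt_0_nat by blast
  then show ?case by (simp add: power_0_left)
next
  case (Suc n)
  have "(of_nat (Suc n) :: 'a) ^ p = (of_nat n + 1) ^ p" by (simp add: add.commute)
  also have "\<dots> = of_nat n ^ p + 1 ^ p" using frob_add[of "of_nat n :: 'a" 1] assms by simp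
  finally show ?case using Suc by (simp add: add.commute)
qed

lemma frob_poly:
  fixes f :: "'a::comm_ring_1 poly" and p :: nat
  assumes "prime p" "CHAR('a) = p"
  shows "f ^ p = pcompose (map_poly (\<lambda>c. c ^ p) f) (monom 1 p)"
proof (induction f)
  case 0 then show ?case using assms prime_gt_0_nat by (simp add: power_0_left)
next
  case (pCons c f)
  have p0: "p > 0" using assms prime_gt_0_nat by blast
  have cp: "prime CHAR('a poly)" using assms by simp
  have "pCons c f = [:c:] + [:0,1:] * f" by simp
  then have "(pCons c f) ^ p = [:c:]^p + ([:0,1:] * f) ^ p"
    using frob_add[OF cp, of "[:c:]" "[:0,1:] * f"] assms by simp
  also have "\<dots> = [:c^p:] + monom 1 p * f ^ p"
    by (simp only: power_mult_distrib poly_const_pow monom_altdef smult_1_left)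
  also have "\<dots> = pcompose (map_poly (\<lambda>c. c ^ p) (pCons c f)) (monom 1 p)"
  proof -
    have "map_poly (\<lambda>c. c^p) (pCons c f) = pCons (c^p) (map_poly (\<lambda>c. c^p) f)"
      by (rule map_poly_pCons) (simp add: p0 power_0_left)
    then show ?thesis using pCons.IH by (simp add: pcompose_pCons)
  qed
  finally show ?case .
qed

lemma pderiv_frob:
  fixes f :: "'a::idom poly" and p :: nat
  assumes "prime p" "CHAR('a) = p"
  shows "pderiv (map_poly (\<lambda>c. c ^ p) f) = map_poly (\<lambda>c. c ^ p) (pderiv f)"
proof -
  have p0: "p > 0" using assms prime_gt_0_nat by blast
  have fn: "\<And>n. (1 + of_nat n :: 'a) ^ p = 1 + of_nat n" using frob_of_nat[OF assms] by (metis of_nat_Suc)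
  show ?thesis
    by (intro poly_eqI) (simp add: coeff_pderiv coeff_map_poly p0 power_mult_distrib fn)
qed


section \<open>coordinate ring lemmas\<close>

lemma cpow_x: "cpow Q (f, 0) n = (f ^ n, 0)"
  by (induction n) (simp_all add: cone_def cmul_def)

lemma cpow_y: "cpow Q cy (2 * k) = (Q ^ k, 0) \<and> cpow Q cy (Suc (2 * k)) = (0, Q ^ k)"
proof (induction k)
  case 0 then show ?case by (simp add: cone_def cmul_def cy_def)
next
  case (Suc k)
  have e: "2 * Suc k = Suc (Suc (2 * k))" by simp
  have a: "cpow Q cy (2 * Suc k) = (Q ^ Suc k, 0)"
    unfolding e using Suc by (simp add: cmul_def cy_def algebra_simps)
  then show ?case by (simp add: cmul_def cy_def)
qed

definition Phi :: "'a::comm_ring_1 coord \<Rightarrow> 'a poly poly" where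
  "Phi z = [:fst z, snd z:]"

definition MM :: "'a::comm_ring_1 poly \<Rightarrow> 'a poly poly" where
  "MM Q = [:-Q, 0, 1:]"

lemma Phi_cmul: "Phi (cmul Q z w) = Phi z * Phi w - smult (snd z * snd w) (MM Q)"
  by (simp add: Phi_def MM_def cmul_def algebra_simps)

lemma Phi_cpow: "MM Q dvd Phi (cpow Q z n) - Phi z ^ n"
proof (induction n)
  case 0 then show ?case by (simp add: Phi_def cone_def one_pCons)
next
  case (Suc n)
  then obtain r where r: "Phi (cpow Q z n) - Phi z ^ n = MM Q * r" by (auto elim: dvdE)
  have "Phi (cpow Q z (Suc n)) - Phi z ^ Suc n
     = Phi z * (Phi (cpow Q z n) - Phi z ^ n) - smult (snd z * snd (cpow Q z n)) (MM Q)"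
    by (simp add: Phi_cmul algebra_simps)
  also have "\<dots> = MM Q * (Phi z * r - [:snd z * snd (cpow Q z n):])"
    by (simp add: r algebra_simps)
  finally show ?case by simp
qed

lemma MM_dvd_lin:
  fixes Q c d :: "'a::idom poly"
  assumes "MM Q dvd [:c, d:]"
  shows "c = 0 \<and> d = 0"
proof -
  obtain r where r: "[:c, d:] = MM Q * r" using assms by (auto elim: dvdE)
  have dM: "degree (MM Q) = 2" by (simp add: MM_def)
  have "r = 0"
  proof (rule ccontr)
    assume "r \<noteq> 0"
    then have "degree (MM Q * r) = 2 + degree r" using dM
      by (subst degree_mult_eq) (auto simp: MM_def)
    moreover have "degree [:c, d:] \<le> 1" by simp
    ultimately show False using r by simp
  qed
  then show ?thesis using r by simp
qed

lemma cpow_frob: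
  fixes Q a b :: "'a::field poly"
  assumes "prime p" "CHAR('a) = p" "p = Suc (2 * k)"
  shows "cpow Q (a, b) p = (a ^ p, b ^ p * Q ^ k)"
proof -
  have cp: "prime CHAR('a poly poly)" using assms by simp
  have cpp: "CHAR('a poly poly) = p" using assms by simp
  have Y: "Phi (cy :: 'a coord) = [:0, 1:]" by (simp add: Phi_def cy_def)
  have d1: "MM Q dvd [:0, 1:] ^ p - [:0, Q ^ k:]"
    using Phi_cpow[of Q cy p] cpow_y[of Q k] assms(3) Y
    by (metis dvd_minus_iff minus_diff_eq Phi_def fst_conv snd_conv)
  have e1: "Phi (a, b) = [:a:] + [:b:] * [:0, 1:]" by (simp add: Phi_def)
  have "Phi (a, b) ^ p = ([:a:] + [:b:] * [:0, 1:]) ^ p" by (simp only: e1)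
  also have "\<dots> = [:a:] ^ p + ([:b:] * [:0, 1:]) ^ p"
    by (rule freshmans_dream[OF cp cpp[symmetric]])
  also have "\<dots> = [:a ^ p:] + [:b ^ p:] * [:0, 1:] ^ p"
    by (simp only: power_mult_distrib poly_const_pow)
  finally have e2: "Phi (a, b) ^ p = [:a ^ p:] + [:b ^ p:] * [:0, 1:] ^ p" .
  have e3: "[:a ^ p:] + [:b ^ p:] * [:0, Q ^ k:] = [:a ^ p, b ^ p * Q ^ k:]" by simp
  have e4: "Phi (a, b) ^ p - [:a ^ p, b ^ p * Q ^ k:] = [:b ^ p:] * ([:0, 1:] ^ p - [:0, Q ^ k:])"
    unfolding e2 e3[symmetric] by (simp add: algebra_simps)
  have "MM Q dvd Phi (a, b) ^ p - [:a ^ p, b ^ p * Q ^ k:]"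
    unfolding e4 using d1 by (rule dvd_mult)
  then have "MM Q dvd (Phi (cpow Q (a, b) p) - Phi (a, b) ^ p) + (Phi (a, b) ^ p - [:a ^ p, b ^ p * Q ^ k:])"
    using Phi_cpow dvd_add by blast
  then have "MM Q dvd [:fst (cpow Q (a, b) p) - a ^ p, snd (cpow Q (a, b) p) - b ^ p * Q ^ k:]"
    by (simp add: Phi_def)
  from MM_dvd_lin[OF this] show ?thesis by (simp add: prod_eq_iff)
qed


lemma bezout_poly:
  fixes a b :: "'k::field poly"
  assumes cop: "coprime a b"
  shows "\<exists>x y. x * a + y * b = 1"
proof -
  define I where "I = {f. \<exists>x y. f = x * a + y * b}"
  have aI: "a \<in> I" unfolding I_def by (rule CollectI, rule exI[of _ 1], rule exI[of _ 0]) simp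
  have bI: "b \<in> I" unfolding I_def by (rule CollectI, rule exI[of _ 0], rule exI[of _ 1]) simp
  have "\<not> (a = 0 \<and> b = 0)"
  proof
    assume "a = 0 \<and> b = 0"
    then have "is_unit (0 :: 'k poly)" using cop by (auto simp: coprime_def)
    then show False by simp
  qed
  then have ex: "\<exists>f. f \<in> I \<and> f \<noteq> 0" using aI bI by blast
  define n where "n = (LEAST n. \<exists>f. f \<in> I \<and> f \<noteq> 0 \<and> degree f = n)"
  have "\<exists>f. f \<in> I \<and> f \<noteq> 0 \<and> degree f = n"
    unfolding n_def by (rule LeastI_ex) (use ex in blast)
  then obtain d where d: "d \<in> I" "d \<noteq> 0" "degree d = n" by blast
  have mn: "n \<le> degree f" if "f \<in> I" "f \<noteq> 0" for f
    unfolding n_def by (rule Least_le) (use that in blast)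
  have dv: "d dvd f" if "f \<in> I" for f
  proof -
    obtain x y where f: "f = x * a + y * b" using \<open>f \<in> I\<close> unfolding I_def by blast
    obtain xd yd where dd: "d = xd * a + yd * b" using d(1) unfolding I_def by blast
    have "f mod d = f - (f div d) * d" by (simp add: minus_div_mult_eq_mod)
    also have "\<dots> = (x - (f div d) * xd) * a + (y - (f div d) * yd) * b"
      by (simp add: f dd algebra_simps)
    finally have "f mod d \<in> I" unfolding I_def by blast
    show ?thesis
    proof (rule ccontr)
      assume "\<not> d dvd f"
      then have nz: "f mod d \<noteq> 0" by (simp add: mod_eq_0_iff_dvd)
      have "degree (f mod d) < degree d" by (rule degree_mod_less'[OF d(2) nz])
      moreover have "n \<le> degree (f mod d)" using mn[OF \<open>f mod d \<in> I\<close> nz] .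
      ultimately show False using d(3) by simp
    qed
  qed
  have "is_unit d" using cop dv[OF aI] dv[OF bI] by (auto simp: coprime_def)
  then obtain e where e: "1 = d * e" by (auto elim: dvdE)
  obtain xd yd where dd: "d = xd * a + yd * b" using d(1) unfolding I_def by blast
  show ?thesis
    by (rule exI[of _ "e * xd"], rule exI[of _ "e * yd"]) (simp add: e dd algebra_simps)
qed

locale W2ctx =
  fixes p :: nat and red :: "'r::comm_ring_1 \<Rightarrow> 'k::field" and mp :: "'k \<Rightarrow> 'r" and sigma :: "'r \<Rightarrow> 'r"
  assumes W2: "W2_data p red mp sigma" and pr: "prime p" and ch: "CHAR('k) = p"
begin

lemma red_hom: "is_ring_hom red" using W2 by (simp add: W2_data_def)
lemma sig_hom: "is_ring_hom sigma" using W2 by (simp add: W2_data_def)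
lemma red_surj: "surj red" using W2 by (simp add: W2_data_def)
lemma red_ker: "red r = 0 \<longleftrightarrow> (\<exists>s. r = of_nat p * s)" using W2 by (simp add: W2_data_def)
lemma mp_addi: "mp (a + b) = mp a + mp b" using W2 by (simp add: W2_data_def)
lemma mp_red: "mp (red r) = of_nat p * r" using W2 by (simp add: W2_data_def)
lemma red_sig: "red (sigma r) = red r ^ p" using W2 by (simp add: W2_data_def)
lemma p0: "p > 0" using pr prime_gt_0_nat by blast

lemma mp_0: "mp 0 = 0" by (metis add_cancel_right_right add_0 mp_addi)
lemma red_p: "red (of_nat p) = 0" using rh_of_nat[OF red_hom] ch of_nat_CHAR by metis
lemma pp: "(of_nat p :: 'r) * of_nat p = 0"
  by (metis mp_red red_p mp_0)

lemma lift_poly: "\<exists>h. f = map_poly red h"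
proof (induction f)
  case 0 then show ?case by (intro exI[of _ 0]) simp
next
  case (pCons c f)
  then obtain h where h: "f = map_poly red h" by blast
  obtain c' where c': "c = red c'" using red_surj by (metis surjD)
  show ?case by (intro exI[of _ "pCons c' h"]) (simp add: mp_pCons[OF red_hom] h c')
qed

lemma mpoly_red: "map_poly mp (map_poly red h) = smult (of_nat p) h"
  by (intro poly_eqI) (simp add: coeff_map_poly mp_0 rh_0[OF red_hom] mp_red)

lemma red_smult_p: "map_poly red (smult (of_nat p) h) = 0"
  by (simp add: mp_smult[OF red_hom] red_p)

lemma smult_p_zero: "map_poly red h = 0 \<Longrightarrow> smult (of_nat p) h = 0"
proof (intro poly_eqI)
  fix n assume "map_poly red h = 0"
  then have "red (coeff h n) = 0" by (metis coeff_0 coeff_map_poly rh_0[OF red_hom])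
  then obtain s where "coeff h n = of_nat p * s" using red_ker by blast
  then show "coeff (smult (of_nat p) h) n = coeff 0 n" by (simp add: pp flip: mult.assoc)
qed

lemma ker_poly: "map_poly red h = 0 \<Longrightarrow> \<exists>D. h = map_poly mp D"
proof (induction h)
  case 0 then show ?case by (intro exI[of _ 0]) simp
next
  case (pCons c h)
  then have "red c = 0" "map_poly red h = 0" by (simp_all add: mp_pCons[OF red_hom])
  then obtain D s where "h = map_poly mp D" "c = of_nat p * s" using pCons red_ker by blast
  then show ?case
    by (intro exI[of _ "pCons (red s) D"]) (simp add: map_poly_pCons mp_0 mp_red)
qed

lemma red_mp: "red (mp c) = 0"
proof -
  obtain r where "c = red r" using red_surj by (metis surjD)
  then show ?thesis using red_ker mp_red by auto
qed

lemma red_sig_poly: "map_poly red (map_poly sigma f) = map_poly (\<lambda>c. c ^ p) (map_poly red f)"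
  by (simp add: mp_comp[OF sig_hom red_hom] map_poly_map_poly rh_0[OF red_hom] p0 power_0_left o_def red_sig)

lemma frob_k: "f ^ p = pcompose (map_poly (\<lambda>c. c ^ p) f) (monom 1 p)" for f :: "'k poly"
  using frob_poly[OF pr ch] .


lemma part1:
  assumes sep: "separable_poly (map_poly red P2)" and p2: "p \<noteq> 2"
  shows "\<exists>u \<alpha>. P2 ^ p - pcompose (map_poly sigma P2) (monom 1 p)
     = map_poly mp (pderiv (map_poly red P2) ^ p * u - 2 * \<alpha> * (map_poly red P2) ^ p)"
proof -
  define Pb where "Pb = map_poly red P2"
  have "map_poly red (P2 ^ p - pcompose (map_poly sigma P2) (monom 1 p)) = 0"
    by (simp add: mp_diff[OF red_hom] mp_power[OF red_hom] mp_pcompose[OF red_hom]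
        mp_monom[OF red_hom] red_sig_poly rh_1[OF red_hom] frob_k[symmetric])
  then obtain D where D: "P2 ^ p - pcompose (map_poly sigma P2) (monom 1 p) = map_poly mp D"
    using ker_poly by blast
  have "coprime Pb (pderiv Pb)" using sep by (simp add: separable_poly_def Pb_def)
  then have "coprime (pderiv Pb) Pb" unfolding coprime_def by blast
  then obtain x y where xy: "x * pderiv Pb + y * Pb = 1" using bezout_poly by blast
  have cp: "prime CHAR('k poly)" using pr ch by simp
  have "(x * pderiv Pb + y * Pb) ^ p = (x * pderiv Pb) ^ p + (y * Pb) ^ p"
    using freshmans_dream[OF cp] ch by simp
  then have st: "x ^ p * pderiv Pb ^ p + y ^ p * Pb ^ p = 1"
    using xy by (simp add: power_mult_distrib)
  define s where "s = x ^ p"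
  define t where "t = y ^ p"
  note st = st[folded s_def t_def]
  have two: "(2::'k) \<noteq> 0"
  proof
    assume "(2::'k) = 0"
    then have "(of_nat 2 :: 'k) = 0" by simp
    then have "p dvd 2" using of_nat_eq_0_iff_char_dvd ch by metis
    then have "p = 1 \<or> p = 2" using two_is_prime_nat prime_nat_iff by blast
    then show False using p2 pr by auto
  qed
  define u where "u = D * s"
  define \<alpha> where "\<alpha> = smult (- inverse 2) (D * t)"
  have "2 * \<alpha> = - (D * t)"
    using two by (simp add: \<alpha>_def numeral_poly)
  then have "pderiv Pb ^ p * u - 2 * \<alpha> * Pb ^ p = D * (s * pderiv Pb ^ p + t * Pb ^ p)"
    by (simp add: u_def algebra_simps)
  also have "\<dots> = D" using st by simp
  finally show ?thesis using D unfolding Pb_def by metis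
qed


lemma part2:
  assumes p2: "p \<noteq> 2"
    and H: "P2 ^ p - pcompose (map_poly sigma P2) (monom 1 p)
     = map_poly mp (pderiv (map_poly red P2) ^ p * u - 2 * \<alpha> * (map_poly red P2) ^ p)"
  shows "\<exists>F. frobenius_lift p red sigma P2 F
                    \<and> F cx = cadd (cpow P2 cx p) (cpolyx (map_poly mp u))
                    \<and> F cy = cadd (cpow P2 cy p) (cmul P2 (cpow P2 cy p) (cpolyx (map_poly mp \<alpha>)))"
proof -
  have "2 < p" using prime_ge_2_nat[OF pr] p2 by linarith
  then have "odd p" by (rule prime_odd_nat[OF pr])
  then obtain k where pk: "p = Suc (2 * k)" by (metis oddE Suc_eq_plus1)
  obtain ut where ut: "u = map_poly red ut" using lift_poly by blast
  obtain alt where alt: "\<alpha> = map_poly red alt" using lift_poly by blast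
  define e where "e = smult (of_nat p) ut"
  define a where "a = smult (of_nat p) alt"
  have e_eq: "map_poly mp u = e" by (simp add: ut e_def mpoly_red)
  have a_eq: "map_poly mp \<alpha> = a" by (simp add: alt a_def mpoly_red)
  have ee: "e * e = 0" by (simp add: e_def pp)
  have aa: "a * a = 0" by (simp add: a_def pp)
  define S where "S = map_poly sigma P2"
  define X :: "'r poly" where "X = monom 1 p"
  define q where "q = X + e"
  define w where "w = P2 ^ k * (1 + a)"
  define Pb where "Pb = map_poly red P2"
  have two: "map_poly red (2 :: 'r poly) = 2"
    using mp_of_nat[OF red_hom, of 2] by simp
  have "pderiv Pb ^ p * u - 2 * \<alpha> * Pb ^ p = map_poly red (pd P2 ^ p * ut - 2 * alt * P2 ^ p)"
    by (simp add: Pb_def ut alt mp_diff[OF red_hom] mp_mult[OF red_hom] mp_power[OF red_hom]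
        mp_pd[OF red_hom] pd_pderiv two)
  then have H2: "P2 ^ p - pcompose S X = smult (of_nat p) (pd P2 ^ p * ut - 2 * alt * P2 ^ p)"
    using H unfolding S_def X_def Pb_def[symmetric] by (simp only: mpoly_red)
  have "smult (of_nat p) (pd P2 ^ p * ut - 2 * alt * P2 ^ p) = pd P2 ^ p * e - 2 * a * P2 ^ p"
    by (simp only: smult_diff_right e_def a_def mult_smult_right mult_smult_left)
  then have H': "P2 ^ p - pcompose S X = pd P2 ^ p * e - 2 * a * P2 ^ p" using H2 by simp
  have tay: "pcompose S q = pcompose S X + e * pcompose (pd S) X"
    unfolding q_def by (rule taylor1[OF ee])
  have redX: "map_poly red X = monom 1 p" by (simp add: X_def mp_monom[OF red_hom] rh_1[OF red_hom])
  have "map_poly red (ut * (pcompose (pd S) X - pd P2 ^ p)) = 0"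
  proof -
    have "map_poly red (pcompose (pd S) X) = pderiv Pb ^ p"
      by (simp add: mp_pcompose[OF red_hom] mp_pd[OF red_hom] pd_pderiv S_def red_sig_poly redX
          pderiv_frob[OF pr ch] frob_k[symmetric] Pb_def)
    then show ?thesis
      by (simp add: mp_mult[OF red_hom] mp_diff[OF red_hom] mp_power[OF red_hom] mp_pd[OF red_hom]
          pd_pderiv Pb_def)
  qed
  then have "smult (of_nat p) (ut * (pcompose (pd S) X - pd P2 ^ p)) = 0" by (rule smult_p_zero)
  then have d: "e * pcompose (pd S) X = e * pd P2 ^ p"
    by (simp add: e_def smult_diff_right right_diff_distrib)
  have key: "pcompose S q = w * w * P2"
  proof -
    have "pcompose S q = P2 ^ p + 2 * a * P2 ^ p"
      using tay d H' by (simp add: algebra_simps)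
    also have "\<dots> = w * w * P2"
    proof -
      have pw: "P2 ^ p = P2 ^ k * P2 ^ k * P2" by (simp add: pk mult_2 power_add)
      have sq: "(1 + a) * (1 + a) = 1 + 2 * a" using aa by (simp add: algebra_simps mult_2)
      have "w * w * P2 = (P2 ^ k * P2 ^ k * P2) * ((1 + a) * (1 + a))"
        by (simp add: w_def algebra_simps)
      then show ?thesis unfolding sq pw[symmetric] by (simp add: algebra_simps)
    qed
    finally show ?thesis .
  qed
  define F where "F = (\<lambda>z::'r coord. (pcompose (map_poly sigma (fst z)) q, pcompose (map_poly sigma (snd z)) q * w))"
  have semi: "semilinear_endo sigma P2 F"
    unfolding semilinear_endo_def
  proof (intro conjI allI)
    show "F cone = cone" by (simp add: F_def cone_def mp_1[OF sig_hom] pcompose_1)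
    show "F (cadd z z') = cadd (F z) (F z')" for z z'
      by (simp add: F_def cadd_def mp_add[OF sig_hom] pcompose_add algebra_simps)
    show "F (cmul P2 z z') = cmul P2 (F z) (F z')" for z z'
    proof -
      have "pcompose (map_poly sigma P2) q = w * w * P2" using key by (simp add: S_def)
      then show ?thesis
        by (simp add: F_def cmul_def mp_add[OF sig_hom] mp_mult[OF sig_hom] pcompose_add pcompose_mult
            algebra_simps)
    qed
    show "F (cconst c) = cconst (sigma c)" for c
      by (simp add: F_def cconst_def mp_const[OF sig_hom])
  qed
  have redq: "map_poly red q = monom 1 p"
    by (simp add: q_def mp_add[OF red_hom] redX e_def red_smult_p)
  have redw: "map_poly red w = Pb ^ k"
    by (simp add: w_def a_def mp_mult[OF red_hom] mp_power[OF red_hom] mp_add[OF red_hom]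
        mp_1[OF red_hom] red_smult_p Pb_def)
  have frob: "cred red (F z) = cpow (map_poly red P2) (cred red z) p" for z
  proof -
    have "cpow Pb (cred red z) p = ((map_poly red (fst z)) ^ p, (map_poly red (snd z)) ^ p * Pb ^ k)"
      unfolding cred_def by (rule cpow_frob[OF pr ch pk])
    then show ?thesis
      by (simp add: cred_def F_def Pb_def[symmetric] mp_mult[OF red_hom] mp_pcompose[OF red_hom]
          red_sig_poly redq redw frob_k[symmetric])
  qed
  have Fx: "F cx = cadd (cpow P2 cx p) (cpolyx (map_poly mp u))"
  proof -
    have s01: "map_poly sigma [:0, 1:] = [:0, 1:]"
      by (simp add: mp_pCons[OF sig_hom] rh_0[OF sig_hom] rh_1[OF sig_hom])
    have "cpow P2 cx p = ([:0,1:] ^ p, 0)" unfolding cx_def by (rule cpow_x)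
    then show ?thesis
      by (simp add: F_def cx_def s01 pcompose_pCons q_def X_def cadd_def cpolyx_def e_eq monom_altdef)
  qed
  have Fy: "F cy = cadd (cpow P2 cy p) (cmul P2 (cpow P2 cy p) (cpolyx (map_poly mp \<alpha>)))"
  proof -
    have "cpow P2 cy p = (0, P2 ^ k)" unfolding pk by (rule conjunct2[OF cpow_y])
    then show ?thesis
      by (simp add: F_def cy_def mp_1[OF sig_hom] pcompose_1 cadd_def cmul_def cpolyx_def a_eq w_def
          algebra_simps)
  qed
  show ?thesis
    using semi frob Fx Fy unfolding frobenius_lift_def by blast
qed

end

lemma semilinear_unique:
  assumes F: "semilinear_endo sigma P F" and G: "semilinear_endo sigma P G"
    and x: "F cx = G cx" and y: "F cy = G cy"
  shows "F = G"
proof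
  have Fa1: "F (cadd u v) = cadd (F u) (F v)" for u v using F unfolding semilinear_endo_def by blast
  have Fa2: "F (cmul P u v) = cmul P (F u) (F v)" for u v using F unfolding semilinear_endo_def by blast
  have Fa3: "F (cconst c) = cconst (sigma c)" for c using F unfolding semilinear_endo_def by blast
  have Ga1: "G (cadd u v) = cadd (G u) (G v)" for u v using G unfolding semilinear_endo_def by blast
  have Ga2: "G (cmul P u v) = cmul P (G u) (G v)" for u v using G unfolding semilinear_endo_def by blast
  have Ga3: "G (cconst c) = cconst (sigma c)" for c using G unfolding semilinear_endo_def by blast
  have Fa: "F (a, 0) = G (a, 0)" for a
  proof (induction a)
    case 0
    have e: "(0, 0) = cconst (0 :: 'a)" by (simp add: cconst_def)
    show ?case unfolding e by (simp only: Fa3 Ga3)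
  next
    case (pCons c a)
    have e: "(pCons c a, 0) = cadd (cconst c) (cmul P cx (a, 0))"
      by (simp add: cadd_def cconst_def cmul_def cx_def)
    show ?case unfolding e by (simp only: Fa1 Fa2 Fa3 Ga1 Ga2 Ga3 x pCons.IH)
  qed
  fix z :: "'a coord"
  obtain a b where z: "z = (a, b)" by (cases z)
  have e: "z = cadd (a, 0) (cmul P (b, 0) cy)" by (simp add: z cadd_def cmul_def cy_def)
  show "F z = G z" unfolding e by (simp only: Fa1 Fa2 Ga1 Ga2 y Fa)
qed

theorem proposition5p2p3:
  fixes p g :: nat
    and red :: "'r::comm_ring_1 \<Rightarrow> 'k::{field,finite}"
    and mp :: "'k \<Rightarrow> 'r" and sigma :: "'r \<Rightarrow> 'r"
    and P2 :: "'r poly"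
  assumes "prime p" and "p \<noteq> 2" and "CHAR('k) = p"
    and "W2_data p red mp sigma"
    and "lead_coeff P2 = 1" and "degree P2 = 2 * g + 1"
    and "separable_poly (map_poly red P2)"
  shows "(\<exists>u \<alpha> :: 'k poly.
            P2 ^ p - pcompose (map_poly sigma P2) (monom 1 p)
              = map_poly mp (pderiv (map_poly red P2) ^ p * u - 2 * \<alpha> * (map_poly red P2) ^ p))
       \<and> (\<forall>u \<alpha> :: 'k poly.
            P2 ^ p - pcompose (map_poly sigma P2) (monom 1 p)
              = map_poly mp (pderiv (map_poly red P2) ^ p * u - 2 * \<alpha> * (map_poly red P2) ^ p)
            \<longrightarrow> (\<exists>F. frobenius_lift p red sigma P2 F
                    \<and> F cx = cadd (cpow P2 cx p) (cpolyx (map_poly mp u))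
                    \<and> F cy = cadd (cpow P2 cy p) (cmul P2 (cpow P2 cy p) (cpolyx (map_poly mp \<alpha>))))
              \<and> (\<forall>F G. semilinear_endo sigma P2 F \<and> semilinear_endo sigma P2 G
                    \<and> F cx = G cx \<and> F cy = G cy \<longrightarrow> F = G))"
proof -
  interpret W2ctx p red mp sigma
    by unfold_locales (fact assms)+
  have A: ?thesis
    apply (intro conjI allI impI)
      apply (rule part1[OF assms(7) assms(2)])
     apply (erule part2[OF assms(2)])
    apply (elim conjE)
    apply (erule (3) semilinear_unique)
    done
  show ?thesis by (fact A)
qed

end
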